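(* Let $A$ be the semi-local highest-score matrix of strings $x$ and $y$, and let $w,r$ be positive integers. A single critical point of the $(w,r)$-restricted highest-score matrix $A^{w,r}$ can be represented using $O(\log(w/r))$ bits, in such a way that all defined entries of $A^{w,r}$ can still be recovered from the stored representation of the critical points.
   Context: Notation: $[i:j] = \{i, \ldots, j\}$ and $\langle i:j\rangle = \{i+\tfrac12, \ldots, j-\tfrac12\}$. The alignment dag of $x = x_1\ldots x_m$ and $y = y_1\ldots y_n$ has vertices $v_{k,l}$, $k\in[0:m]$, $l\in[0:n]$, horizontal and vertical edges of score $0$, and diagonal edges $v_{k-1,l-1}\to v_{k,l}$ of score $1$ present exactly when $x_k=y_l$. The (semi-local) highest-score matrix $A$ has entry $A(i,j)$ equal to the maximum path score from the top boundary at column $i$ to the bottom boundary at column $j$ (the LLCS of $x$ and the corresponding substring of $y$), in Tiskin's semi-local framework. A critical point of $A$ is a pair of odd half-integers $(\hat{\imath},\hat{\jmath})$ with $A(\hat{\imath}+\tfrac12,\hat{\jmath}-\tfrac12)+1 = A(\hat{\imath}-\tfrac12,\hat{\jmath}-\tfrac12) = A(\hat{\imath}+\tfrac12,\hat{\jmath}+\tfrac12) = A(\hat{\imath}-\tfrac12,\hat{\jmath}+\tfrac12)$; its span is $\hat{\jmath}-\hat{\imath}$. Known fact (Tiskin): the critical points form a permutation matrix $D_A$ and $A(i,j) = j-i-\#\{(\hat{\imath},\hat{\jmath}) \text{ critical}: \hat{\imath}>i,\ \hat{\jmath}<j\}$. The $(w,r)$-restricted highest-score matrix is $A^{w,r}(i,j)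 = A(i,j)$ if $j-i\le w$ and $i \bmod r = j \bmod r = 0$, undefined otherwise; its critical points are those of $A$ relevant to these entries (i.e. with span less than $w$). *)

theory Defs
  imports Main
begin

text \<open>Characters of the padded string: y is extended by m wildcards (None) on each side,
  as in Tiskin's semi-local framework.\<close>

definition ext_char :: "'a list \<Rightarrow> int \<Rightarrow> 'a option" where
  "ext_char y l = (if 1 \<le> l \<and> l \<le> int (length y) then Some (y ! nat (l - 1)) else None)"

definition window :: "'a list \<Rightarrow> int \<Rightarrow> int \<Rightarrow> 'a option list" where
  "window y i j = map (ext_char y) [i+1..j]"

definition match :: "'a option \<Rightarrow> 'a option \<Rightarrow> bool" where
  "match a b = (a = None \<or> b = None \<or> a = b)"

fun llcs :: "'a option list \<Rightarrow> 'a option list \<Rightarrow> nat" where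
  "llcs [] ys = 0"
| "llcs xs [] = 0"
| "llcs (a # xs) (b # ys) =
     max (if match a b then llcs xs ys + 1 else 0) (max (llcs (a # xs) ys) (llcs xs (b # ys)))"

text \<open>Semi-local highest-score matrix A(i,j), i in [-m:n], j in [0:m+n];
  A(i,j) = j - i for j < i (Tiskin's convention).\<close>
definition hsm :: "'a list \<Rightarrow> 'a list \<Rightarrow> int \<Rightarrow> int \<Rightarrow> int" where
  "hsm x y i j = (if j < i then j - i else int (llcs (map Some x) (window y i j)))"

definition in_range :: "'a list \<Rightarrow> 'a list \<Rightarrow> int \<Rightarrow> int \<Rightarrow> bool" where
  "in_range x y i j \<longleftrightarrow> - int (length x) \<le> i \<and> i \<le> int (length y)
      \<and> 0 \<le> j \<and> j \<le> int (length x) + int (length y)"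

text \<open>Critical point (p,q) encodes the pair of odd half-integers (p+1/2, q+1/2).\<close>
definition critical :: "'a list \<Rightarrow> 'a list \<Rightarrow> int \<Rightarrow> int \<Rightarrow> bool" where
  "critical x y p q \<longleftrightarrow> in_range x y p q \<and> in_range x y (p+1) (q+1) \<and>
     hsm x y (p+1) q + 1 = hsm x y p q \<and> hsm x y p q = hsm x y (p+1) (q+1) \<and>
     hsm x y (p+1) (q+1) = hsm x y p (q+1)"

definition restr_critical :: "'a list \<Rightarrow> 'a list \<Rightarrow> nat \<Rightarrow> int \<Rightarrow> int \<Rightarrow> bool" where
  "restr_critical x y w p q \<longleftrightarrow> critical x y p q \<and> q - p < int w"

definition restr_defined :: "'a list \<Rightarrow> 'a list \<Rightarrow> nat \<Rightarrow> nat \<Rightarrow> int \<Rightarrow> int \<Rightarrow> bool" where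
  "restr_defined x y w r i j \<longleftrightarrow> in_range x y i j \<and> j - i \<le> int w
      \<and> i mod int r = 0 \<and> j mod int r = 0"

text \<open>Stored representation: an array indexed by the (implicit) position p of the
  critical point's first coordinate, holding the code enc p q of the restricted critical
  point (p,q), or None if there is none.\<close>
definition stored :: "'a list \<Rightarrow> 'a list \<Rightarrow> nat \<Rightarrow> (int \<Rightarrow> int \<Rightarrow> nat) \<Rightarrow> int \<Rightarrow> nat option" where
  "stored x y w enc = (\<lambda>p. if \<exists>q. restr_critical x y w p q
      then Some (enc p (THE q. restr_critical x y w p q)) else None)"

end

theory Submission
  imports Defs
begin


lemma llcs_Nil2[simp]: "llcs xs [] = 0" by (cases xs) auto

lemma llcs_le_len2: "llcs xs ys \<le> length ys"
  by (induction xs ys rule: llcs.induct) auto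
lemma llcs_le_len1: "llcs xs ys \<le> length xs"
  by (induction xs ys rule: llcs.induct) auto

lemma mono_f2: "llcs xs ys \<le> llcs xs (c#ys)" by (cases xs) auto
lemma mono_f1: "llcs xs ys \<le> llcs (a#xs) ys" by (cases ys) auto

lemma inc_f2: "llcs xs (c#ys) \<le> llcs xs ys + 1"
proof (induction xs arbitrary: ys)
  case Nil then show ?case by simp
next
  case (Cons a xs)
  have "llcs xs ys \<le> llcs (a#xs) ys" by (rule mono_f1)
  with Cons.IH[of ys] show ?case by (auto simp: max_def)
qed

lemma max3_cases: "(X::nat) = max (if P then u else 0) (max v w) \<Longrightarrow> (P \<and> X = u) \<or> X = v \<or> X = w"
  by (auto simp: max_def)

lemma mono_b2: "llcs xs ys \<le> llcs xs (ys@[d])"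
  by (induction xs ys rule: llcs.induct) (auto simp: max_def)

lemma inc_b2: "llcs xs (ys@[d]) \<le> llcs xs ys + 1"
proof (induction xs ys rule: llcs.induct)
  case (1 ys) then show ?case by simp
next
  case (2 a xs) then show ?case using llcs_le_len2[of "a#xs" "[d]"] by simp
next
  case (3 a xs c ys)
  then show ?case by (auto simp: max_def)
qed

definition M1 :: "'a option list \<Rightarrow> bool" where
  "M1 xs \<longleftrightarrow> (\<forall>c w d. llcs xs w + llcs xs (c#w@[d]) \<le> llcs xs (c#w) + llcs xs (w@[d]))"

lemma M2:
  assumes "M1 xs"
  shows "llcs (a#xs) w + llcs xs (w@[d]) \<le> llcs xs w + llcs (a#xs) (w@[d])"
proof (induction w)
  case Nil
  show ?case using mono_f1[of xs "[d]" a] by simp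
next
  case (Cons c w)
  have m1: "llcs xs w + llcs xs (c#w@[d]) \<le> llcs xs (c#w) + llcs xs (w@[d])"
    using assms M1_def by blast
  have e: "llcs (a#xs) (c#w) = max (if match a c then llcs xs w + 1 else 0) (max (llcs (a#xs) w) (llcs xs (c#w)))" by simp
  have r1: "llcs (a#xs) (w@[d]) \<le> llcs (a#xs) (c#(w@[d]))" by (rule mono_f2)
  have r2: "llcs xs (c#(w@[d])) \<le> llcs (a#xs) (c#(w@[d]))" by (rule mono_f1)
  have r3: "match a c \<Longrightarrow> llcs xs (w@[d]) + 1 \<le> llcs (a#xs) (c#(w@[d]))" by simp
  consider (A) "match a c" "llcs (a#xs) (c#w) = llcs xs w + 1"
    | (B) "llcs (a#xs) (c#w) = llcs (a#xs) w"
    | (C) "llcs (a#xs) (c#w) = llcs xs (c#w)"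
    using max3_cases[OF e] by blast
  then show ?case
  proof cases
    case A then show ?thesis using m1 r3 by simp
  next
    case B then show ?thesis using Cons.IH m1 r1 by simp
  next
    case C then show ?thesis using r2 by simp
  qed
qed

lemma M1_all: "M1 xs"
proof (induction xs)
  case Nil show ?case by (simp add: M1_def)
next
  case (Cons a xs)
  show ?case unfolding M1_def
  proof (intro allI)
    fix c w d
    have m1: "llcs xs w + llcs xs (c#w@[d]) \<le> llcs xs (c#w) + llcs xs (w@[d])"
      using Cons M1_def by blast
    have m2: "llcs (a#xs) w + llcs xs (w@[d]) \<le> llcs xs w + llcs (a#xs) (w@[d])"
      by (rule M2[OF Cons.IH])
    have e: "llcs (a#xs) (c#(w@[d])) = max (if match a c then llcs xs (w@[d]) + 1 else 0) (max (llcs (a#xs) (w@[d])) (llcs xs (c#(w@[d]))))" by simp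
    have f1: "llcs (a#xs) w \<le> llcs (a#xs) (c#w)" by (rule mono_f2)
    have f2: "llcs xs (c#w) \<le> llcs (a#xs) (c#w)" by (rule mono_f1)
    have f3: "match a c \<Longrightarrow> llcs xs w + 1 \<le> llcs (a#xs) (c#w)" by simp
    consider (A) "match a c" "llcs (a#xs) (c#(w@[d])) = llcs xs (w@[d]) + 1"
      | (B) "llcs (a#xs) (c#(w@[d])) = llcs (a#xs) (w@[d])"
      | (C) "llcs (a#xs) (c#(w@[d])) = llcs xs (c#(w@[d]))"
      using max3_cases[OF e] by blast
    then show "llcs (a#xs) w + llcs (a#xs) (c#w@[d]) \<le> llcs (a#xs) (c#w) + llcs (a#xs) (w@[d])"
    proof cases
      case A then show ?thesis using m2 f3 by simp
    next
      case B then show ?thesis using f1 by simp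
    next
      case C then show ?thesis using m1 m2 f2 by simp
    qed
  qed
qed

lemma monge: "llcs xs w + llcs xs (c#w@[d]) \<le> llcs xs (c#w) + llcs xs (w@[d])"
  using M1_all M1_def by blast

lemma llcs_repl: "llcs xs (replicate k None) = min (length xs) k"
proof (induction xs arbitrary: k)
  case Nil then show ?case by simp
next
  case (Cons a xs)
  show ?case
  proof (cases k)
    case 0 then show ?thesis by simp
  next
    case (Suc k')
    let ?t = "min (length xs) k'"
    have b1: "llcs (a#xs) (replicate k' None) \<le> Suc ?t"
      using llcs_le_len1[of "a#xs"] llcs_le_len2[of "a#xs" "replicate k' None"] by (simp add: min_def)
    have b2: "llcs xs (None # replicate k' None) \<le> Suc ?t"
      using llcs_le_len1[of xs] llcs_le_len2[of xs "None # replicate k' None"]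
      by (simp add: min_def) (meson le_SucI)
    have "llcs (a#xs) (replicate k None) = max (Suc ?t) (max (llcs (a#xs) (replicate k' None)) (llcs xs (None # replicate k' None)))"
      using Suc Cons.IH[of k'] by (simp add: match_def)
    also have "\<dots> = Suc ?t" using b1 b2 by simp
    finally show ?thesis using Suc by simp
  qed
qed

lemma llcs_app_ge: "llcs xs t \<le> llcs xs (s @ t)"
  by (induction s) (auto intro: order_trans[OF _ mono_f2])



lemma window_empty: "j \<le> i \<Longrightarrow> window y i j = []"
  by (simp add: window_def)

lemma window_snoc: "i \<le> j \<Longrightarrow> window y i (j+1) = window y i j @ [ext_char y (j+1)]"
  unfolding window_def using upto_rec2[of "i+1" "j+1"] by simp

lemma window_cons: "i < j \<Longrightarrow> window y i j = ext_char y (i+1) # window y (i+1) j"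
  unfolding window_def using upto_rec1[of "i+1" j] by simp

lemma window_split: "i \<le> k \<Longrightarrow> k \<le> j \<Longrightarrow> window y i j = window y i k @ window y k j"
proof (cases "k = i")
  case True then show ?thesis by (simp add: window_empty)
next
  case False
  assume "i \<le> k" "k \<le> j"
  then show ?thesis using False upto_split2[of "i+1" k j] unfolding window_def by simp
qed

lemma window_none:
  assumes "\<And>l. i < l \<Longrightarrow> l \<le> j \<Longrightarrow> ext_char y l = None"
  shows "window y i j = replicate (nat (j-i)) None"
proof -
  have "window y i j = map (\<lambda>_. None) [i+1..j]"
    unfolding window_def by (rule map_cong) (auto intro: assms)
  then show ?thesis by (simp add: map_replicate_const)
qed

lemma ext_none: "l \<le> 0 \<or> int (length y) < l \<Longrightarrow> ext_char y l = None"
  by (auto simp: ext_char_def)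

lemma hsm_ii[simp]: "hsm x y i i = 0"
  by (simp add: hsm_def window_empty)

lemma F1: "hsm x y i j \<le> hsm x y i (j+1) \<and> hsm x y i (j+1) \<le> hsm x y i j + 1"
proof -
  consider "j + 1 < i" | "j + 1 = i" | "i \<le> j" by linarith
  then show ?thesis
  proof cases
    case 1 then show ?thesis by (simp add: hsm_def)
  next
    case 2 then show ?thesis by (auto simp: hsm_def)
  next
    case 3
    then show ?thesis
      using mono_b2[of "map Some x" "window y i j" "ext_char y (j+1)"]
        inc_b2[of "map Some x" "window y i j" "ext_char y (j+1)"]
      by (simp add: hsm_def window_snoc)
  qed
qed

lemma F2: "hsm x y (i+1) j \<le> hsm x y i j \<and> hsm x y i j \<le> hsm x y (i+1) j + 1"
proof -
  consider "j < i" | "j = i" | "i < j" by linarith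
  then show ?thesis
  proof cases
    case 1 then show ?thesis by (simp add: hsm_def)
  next
    case 2 then show ?thesis by (auto simp: hsm_def)
  next
    case 3
    then show ?thesis
      using mono_f2[of "map Some x" "window y (i+1) j" "ext_char y (i+1)"]
        inc_f2[of "map Some x" "ext_char y (i+1)" "window y (i+1) j"]
      by (simp add: hsm_def window_cons)
  qed
qed

lemma F3: "hsm x y (i+1) j + hsm x y i (j+1) \<le> hsm x y i j + hsm x y (i+1) (j+1)"
proof -
  consider "j + 1 < i" | "j + 1 = i" | "j = i" | "i < j" by linarith
  then show ?thesis
  proof cases
    case 1 then show ?thesis by (simp add: hsm_def)
  next
    case 2 then show ?thesis by (auto simp: hsm_def)
  next
    case 3 then show ?thesis using F1[of x y i i] by (simp add: hsm_def)
  next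
    case 4
    let ?w = "window y (i+1) j" and ?c = "ext_char y (i+1)" and ?d = "ext_char y (j+1)"
    have w1: "window y i j = ?c # ?w" using 4 by (rule window_cons)
    have w2: "window y (i+1) (j+1) = ?w @ [?d]" using 4 by (simp add: window_snoc)
    have w3: "window y i (j+1) = ?c # ?w @ [?d]"
      using 4 window_cons[of i "j+1" y] window_snoc[of "i+1" j y] by simp
    show ?thesis using 4 monge[of "map Some x" ?w ?c ?d]
      by (simp add: hsm_def w1 w2 w3)
  qed
qed

lemma B1: "- int (length x) \<le> i \<Longrightarrow> hsm x y i 0 = - i"
proof (cases "i \<le> 0")
  case True
  assume a: "- int (length x) \<le> i"
  have "window y i 0 = replicate (nat (0 - i)) None"
    by (rule window_none) (auto intro: ext_none)
  then show ?thesis using True a by (simp add: hsm_def llcs_repl min_def) arith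
qed (simp add: hsm_def)

lemma B2: "j \<le> int (length x) + int (length y) \<Longrightarrow> hsm x y (int (length y)) j = j - int (length y)"
proof (cases "int (length y) \<le> j")
  case True
  assume a: "j \<le> int (length x) + int (length y)"
  have "window y (int (length y)) j = replicate (nat (j - int (length y))) None"
    by (rule window_none) (auto intro: ext_none)
  then show ?thesis using True a by (simp add: hsm_def llcs_repl min_def) arith
qed (simp add: hsm_def)

lemma B3: "- int (length x) \<le> i \<Longrightarrow> i \<le> int (length y) \<Longrightarrow>
   hsm x y i (int (length x) + int (length y)) = int (length x)"
proof -
  assume a: "- int (length x) \<le> i" "i \<le> int (length y)"
  let ?n = "int (length y)" and ?N = "int (length x) + int (length y)"
  have s: "window y i ?N = window y i ?n @ window y ?n ?N"
    using a by (intro window_split) auto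
  have r: "window y ?n ?N = replicate (length x) None"
    by (subst window_none) (auto intro: ext_none)
  have "llcs (map Some x) (window y i ?N) \<ge> length x"
    using llcs_app_ge[of "map Some x" "replicate (length x) None" "window y i ?n"] s r
    by (simp add: llcs_repl)
  moreover have "llcs (map Some x) (window y i ?N) \<le> length x"
    using llcs_le_len1[of "map Some x"] by simp
  ultimately show ?thesis using a by (simp add: hsm_def)
qed



definition dlt :: "'a list \<Rightarrow> 'a list \<Rightarrow> int \<Rightarrow> int \<Rightarrow> int" where
  "dlt x y p q = hsm x y p q + hsm x y (p+1) (q+1) - hsm x y (p+1) q - hsm x y p (q+1)"

lemma dlt01: "0 \<le> dlt x y p q \<and> dlt x y p q \<le> 1"
  using F3[of x y p q] F2[of x y p q] F2[of x y p "q+1"] unfolding dlt_def by linarith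

lemma crit_iff:
  "- int (length x) \<le> p \<Longrightarrow> p < int (length y) \<Longrightarrow> 0 \<le> q \<Longrightarrow> q < int (length x) + int (length y)
   \<Longrightarrow> critical x y p q \<longleftrightarrow> dlt x y p q = 1"
  using F1[of x y p q] F1[of x y "p+1" q] F2[of x y p q] F2[of x y p "q+1"]
  unfolding critical_def in_range_def dlt_def by auto

lemma crit_range: "critical x y p q \<Longrightarrow> - int (length x) \<le> p \<and> p < int (length y) \<and> 0 \<le> q \<and> q < int (length x) + int (length y)"
  unfolding critical_def in_range_def by auto

lemma col:
  assumes q: "0 \<le> q" "q < int (length x) + int (length y)"
  shows "- int (length x) \<le> i \<Longrightarrow> i \<le> int (length y) \<Longrightarrow>
    hsm x y i q - hsm x y i (q+1) + 1 = int (card {p \<in> {i..<int (length y)}. critical x y p q})"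
proof -
  let ?n = "int (length y)"
  have "\<forall>i. i = ?n - int k \<longrightarrow> - int (length x) \<le> i \<longrightarrow>
    hsm x y i q - hsm x y i (q+1) + 1 = int (card {p \<in> {i..<?n}. critical x y p q})" for k
  proof (induction k)
    case 0
    show ?case using B2[of q x y] B2[of "q+1" x y] q by simp
  next
    case (Suc k)
    show ?case
    proof (intro allI impI)
      fix i assume i: "i = ?n - int (Suc k)" "- int (length x) \<le> i"
      have ih: "hsm x y (i+1) q - hsm x y (i+1) (q+1) + 1 = int (card {p \<in> {i+1..<?n}. critical x y p q})"
      proof -
        have e1: "i + 1 = ?n - int k" using i by simp
        have e2: "- int (length x) \<le> i + 1" using i by simp
        show ?thesis using Suc.IH[rule_format, OF e1 e2] .
      qed
      have fin: "finite {p \<in> {i+1..<?n}. critical x y p q}" by (rule finite_subset[of _ "{i+1..<?n}"]) auto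
      have setq: "{p \<in> {i..<?n}. critical x y p q} = (if critical x y i q then insert i {p \<in> {i+1..<?n}. critical x y p q} else {p \<in> {i+1..<?n}. critical x y p q})"
      proof (cases "critical x y i q")
        case True
        have lt: "i < ?n" using i by simp
        have "{p \<in> {i..<?n}. critical x y p q} = insert i {p \<in> {i+1..<?n}. critical x y p q}"
        proof (intro set_eqI iffI)
          fix p assume a: "p \<in> {p \<in> {i..<?n}. critical x y p q}"
          show "p \<in> insert i {p \<in> {i+1..<?n}. critical x y p q}"
          proof (cases "p = i")
            case False then show ?thesis using a by auto
          qed simp
        next
          fix p assume "p \<in> insert i {p \<in> {i+1..<?n}. critical x y p q}"
          then show "p \<in> {p \<in> {i..<?n}. critical x y p q}" using True lt by auto
        qed
        then show ?thesis using True by simp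
      next
        case False
        have "{p \<in> {i..<?n}. critical x y p q} = {p \<in> {i+1..<?n}. critical x y p q}"
        proof (intro set_eqI iffI)
          fix p assume "p \<in> {p \<in> {i..<?n}. critical x y p q}"
          moreover then have "p \<noteq> i" using False by auto
          ultimately show "p \<in> {p \<in> {i+1..<?n}. critical x y p q}" by auto
        qed auto
        then show ?thesis using False by simp
      qed
      have ci: "critical x y i q \<longleftrightarrow> dlt x y i q = 1" using i q by (intro crit_iff) auto
      show "hsm x y i q - hsm x y i (q+1) + 1 = int (card {p \<in> {i..<?n}. critical x y p q})"
      proof (cases "critical x y i q")
        case True
        then have "card {p \<in> {i..<?n}. critical x y p q} = Suc (card {p \<in> {i+1..<?n}. critical x y p q})"
          using setq fin by simp
        then show ?thesis using ih ci True unfolding dlt_def by simp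
      next
        case False
        then have "card {p \<in> {i..<?n}. critical x y p q} = card {p \<in> {i+1..<?n}. critical x y p q}"
          using setq by simp
        moreover have "dlt x y i q = 0" using False ci dlt01[of x y i q] by simp
        ultimately show ?thesis using ih unfolding dlt_def by simp
      qed
    qed
  qed
  moreover assume "- int (length x) \<le> i" "i \<le> int (length y)"
  ultimately show ?thesis
  proof -
    assume all: "\<And>k. \<forall>i. i = ?n - int k \<longrightarrow> - int (length x) \<le> i \<longrightarrow>
      hsm x y i q - hsm x y i (q+1) + 1 = int (card {p \<in> {i..<?n}. critical x y p q})"
      and a: "- int (length x) \<le> i" "i \<le> int (length y)"
    have "i = ?n - int (nat (?n - i))" using a by simp
    then show ?thesis using all[of "nat (?n - i)"] a by blast
  qed
qed

definition Pset :: "'a list \<Rightarrow> 'a list \<Rightarrow> int \<Rightarrow> int \<Rightarrow> (int \<times> int) set" where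
  "Pset x y i j = {(p,q). p \<in> {i..<int (length y)} \<and> q \<in> {0..<j} \<and> critical x y p q}"

lemma Pset_fin: "finite (Pset x y i j)"
  by (rule finite_subset[of _ "{i..<int (length y)} \<times> {0..<j}"]) (auto simp: Pset_def)

lemma twoD:
  assumes i: "- int (length x) \<le> i" "i \<le> int (length y)"
  shows "0 \<le> j \<Longrightarrow> j \<le> int (length x) + int (length y) \<Longrightarrow> hsm x y i j = j - i - int (card (Pset x y i j))"
proof -
  have "\<forall>j. j = int k \<longrightarrow> j \<le> int (length x) + int (length y) \<longrightarrow> hsm x y i j = j - i - int (card (Pset x y i j))" for k
  proof (induction k)
    case 0
    have "Pset x y i 0 = {}" by (auto simp: Pset_def)
    then show ?case using B1[OF i(1), of y] by simp
  next
    case (Suc k)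
    show ?case
    proof (intro allI impI)
      fix j assume j: "j = int (Suc k)" "j \<le> int (length x) + int (length y)"
      let ?j = "int k"
      have ih: "hsm x y i ?j = ?j - i - int (card (Pset x y i ?j))" using Suc.IH j by auto
      let ?S = "{p \<in> {i..<int (length y)}. critical x y p ?j}"
      have split: "Pset x y i j = Pset x y i ?j \<union> (\<lambda>p. (p, ?j)) ` ?S"
      proof (intro set_eqI iffI)
        fix z assume z: "z \<in> Pset x y i j"
        obtain p q where pq: "z = (p,q)" "p \<in> {i..<int (length y)}" "q \<in> {0..<j}" "critical x y p q"
          using z by (auto simp: Pset_def)
        show "z \<in> Pset x y i ?j \<union> (\<lambda>p. (p, ?j)) ` ?S"
        proof (cases "q = ?j")
          case True then show ?thesis using pq by auto
        next
          case False then show ?thesis using pq j by (auto simp: Pset_def)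
        qed
      qed (use j in \<open>auto simp: Pset_def\<close>)
      have disj: "Pset x y i ?j \<inter> (\<lambda>p. (p, ?j)) ` ?S = {}" by (auto simp: Pset_def)
      have finS: "finite ?S" by (rule finite_subset[of _ "{i..<int (length y)}"]) auto
      have ci: "card ((\<lambda>p. (p, ?j)) ` ?S) = card ?S" by (rule card_image) (auto simp: inj_on_def)
      have c: "card (Pset x y i j) = card (Pset x y i ?j) + card ?S"
        unfolding split using card_Un_disjoint[OF Pset_fin finite_imageI[OF finS] disj] ci by simp
      have cl: "hsm x y i ?j - hsm x y i (?j+1) + 1 = int (card ?S)"
        using col[of ?j x y i] j i by simp
      have jj: "j = ?j + 1" using j by simp
      have c': "int (card (Pset x y i (?j+1))) = int (card (Pset x y i ?j)) + int (card ?S)"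
        using c jj by simp
      show "hsm x y i j = j - i - int (card (Pset x y i j))"
        unfolding jj using ih cl c' by linarith
    qed
  qed
  moreover assume "0 \<le> j" "j \<le> int (length x) + int (length y)"
  ultimately show ?thesis
  proof -
    assume all: "\<And>k. \<forall>j. j = int k \<longrightarrow> j \<le> int (length x) + int (length y) \<longrightarrow> hsm x y i j = j - i - int (card (Pset x y i j))"
      and a: "0 \<le> j" "j \<le> int (length x) + int (length y)"
    have "j = int (nat j)" using a by simp
    then show ?thesis using all[of "nat j"] a by blast
  qed
qed

lemma card1_eq: "card A = 1 \<Longrightarrow> a \<in> A \<Longrightarrow> b \<in> A \<Longrightarrow> a = b"
  by (metis card_1_singletonE singletonD)

lemma crit_uniq:
  assumes c1: "critical x y p q" and c2: "critical x y p q'"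
  shows "q = q'"
proof -
  let ?N = "int (length x) + int (length y)"
  have r: "- int (length x) \<le> p" "p < int (length y)" using crit_range[OF c1] by auto
  have r1: "0 \<le> q" "q < ?N" "0 \<le> q'" "q' < ?N" using crit_range[OF c1] crit_range[OF c2] by auto
  have h0: "hsm x y p ?N = ?N - p - int (card (Pset x y p ?N))"
    using twoD[of x p y ?N] r by simp
  have h1: "hsm x y (p+1) ?N = ?N - (p+1) - int (card (Pset x y (p+1) ?N))"
    using twoD[of x "p+1" y ?N] r by simp
  have e: "hsm x y p ?N = hsm x y (p+1) ?N" using B3[of x p y] B3[of x "p+1" y] r by simp
  let ?S = "{q \<in> {0..<?N}. critical x y p q}"
  have split: "Pset x y p ?N = Pset x y (p+1) ?N \<union> (\<lambda>q. (p, q)) ` ?S"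
  proof (intro set_eqI iffI)
    fix z assume z: "z \<in> Pset x y p ?N"
    obtain a b where ab: "z = (a,b)" "a \<in> {p..<int (length y)}" "b \<in> {0..<?N}" "critical x y a b"
      using z by (auto simp: Pset_def)
    show "z \<in> Pset x y (p+1) ?N \<union> (\<lambda>q. (p, q)) ` ?S"
    proof (cases "a = p")
      case True then show ?thesis using ab by auto
    next
      case False then show ?thesis using ab by (auto simp: Pset_def)
    qed
  qed (use r in \<open>auto simp: Pset_def\<close>)
  have disj: "Pset x y (p+1) ?N \<inter> (\<lambda>q. (p, q)) ` ?S = {}" by (auto simp: Pset_def)
  have finS: "finite ?S" by (rule finite_subset[of _ "{0..<?N}"]) auto
  have ci: "card ((\<lambda>q. (p, q)) ` ?S) = card ?S" by (rule card_image) (auto simp: inj_on_def)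
  have c: "card (Pset x y p ?N) = card (Pset x y (p+1) ?N) + card ?S"
    unfolding split using card_Un_disjoint[OF Pset_fin finite_imageI[OF finS] disj] ci by simp
  have "card ?S = 1" using h0 h1 e c by simp
  then show ?thesis by (rule card1_eq) (use c1 c2 r1 in auto)
qed

lemma crit_le:
  assumes c: "critical x y p q" shows "p \<le> q"
proof (rule ccontr)
  assume "\<not> p \<le> q"
  have r: "- int (length x) \<le> p" "p < int (length y)" "0 \<le> q" "q < int (length x) + int (length y)"
    using crit_range[OF c] by auto
  have "hsm x y p p = p - p - int (card (Pset x y p p))"
    using twoD[of x p y p] r \<open>\<not> p \<le> q\<close> by simp
  then have "Pset x y p p = {}" using Pset_fin[of x y p p] by simp
  moreover have "(p,q) \<in> Pset x y p p" using r c \<open>\<not> p \<le> q\<close> by (auto simp: Pset_def)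
  ultimately show False by simp
qed



lemma div_lt: "(0::int) < r \<Longrightarrow> j mod r = 0 \<Longrightarrow> q < j \<Longrightarrow> q div r < j div r"
proof -
  assume a: "0 < r" "j mod r = 0" "q < j"
  have "q div r * r \<le> q" using div_mult_mod_eq[of q r] pos_mod_sign[OF a(1), of q] by linarith
  also have "\<dots> < j" by fact
  also have "j = j div r * r" using a by (metis add.right_neutral div_mult_mod_eq)
  finally show ?thesis using a by (simp add: mult_less_cancel_right)
qed

lemma div_diff_le: "(0::int) < r \<Longrightarrow> i mod r = 0 \<Longrightarrow> j mod r = 0 \<Longrightarrow> j - i \<le> w \<Longrightarrow> j div r - i div r \<le> w div r"
proof -
  assume a: "0 < r" "i mod r = 0" "j mod r = 0" "j - i \<le> w"
  have "j - i = (j div r - i div r) * r" using a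
    by (metis add.right_neutral div_mult_mod_eq left_diff_distrib)
  then have "(j - i) div r = j div r - i div r" using a by simp
  moreover have "(j - i) div r \<le> w div r" using a by (simp add: zdiv_mono1)
  ultimately show ?thesis by simp
qed

lemma the_rc: "restr_critical x y w p q \<Longrightarrow> (THE q. restr_critical x y w p q) = q"
  by (rule the_equality) (auto simp: restr_critical_def intro: crit_uniq)

theorem proposition2:
  "\<exists>C::nat. \<forall>w r::nat. 0 < w \<longrightarrow> 0 < r \<longrightarrow>
     (\<exists>(enc :: int \<Rightarrow> int \<Rightarrow> nat) (dec :: nat \<Rightarrow> nat \<Rightarrow> (int \<Rightarrow> nat option) \<Rightarrow> int \<Rightarrow> int \<Rightarrow> int).
        (\<forall>p q. enc p q < C * (w div r + 1)) \<and>
        (\<forall>(x :: 'a list) (y :: 'a list) i j. restr_defined x y w r i j \<longrightarrow>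
            dec (length x) (length y) (stored x y w enc) i j = hsm x y i j))"
proof (intro exI allI impI)
  fix w r :: nat
  assume w: "0 < w" and r: "0 < r"
  define R where "R = int r"
  have R: "0 < R" using r R_def by simp
  define enc :: "int \<Rightarrow> int \<Rightarrow> nat" where
    "enc = (\<lambda>p q. min (nat (q div R - p div R)) (w div r + 1))"
  define dec :: "nat \<Rightarrow> nat \<Rightarrow> (int \<Rightarrow> nat option) \<Rightarrow> int \<Rightarrow> int \<Rightarrow> int" where
    "dec = (\<lambda>mm nn arr i j. j - i - int (card {p \<in> {i..<min j (int nn)}. \<exists>e. arr p = Some e \<and> int e < j div R - p div R}))"
  show "(\<forall>p q. enc p q < 2 * (w div r + 1)) \<and>
        (\<forall>(x :: 'a list) (y :: 'a list) i j. restr_defined x y w r i j \<longrightarrow>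
            dec (length x) (length y) (stored x y w enc) i j = hsm x y i j)"
  proof (intro conjI allI impI)
    fix p q show "enc p q < 2 * (w div r + 1)" unfolding enc_def by simp
  next
    fix x y :: "'a list" and i j
    assume d: "restr_defined x y w r i j"
    let ?n = "int (length y)"
    have ir: "- int (length x) \<le> i" "i \<le> ?n" "0 \<le> j" "j \<le> int (length x) + ?n"
      "j - i \<le> int w" "i mod R = 0" "j mod R = 0"
      using d unfolding restr_defined_def in_range_def R_def by auto
    have h: "hsm x y i j = j - i - int (card (Pset x y i j))" using twoD[of x i y j] ir by simp
    let ?D = "{p \<in> {i..<min j ?n}. \<exists>e. stored x y w enc p = Some e \<and> int e < j div R - p div R}"
    have inj: "inj_on fst (Pset x y i j)"
      by (auto simp: inj_on_def Pset_def intro: crit_uniq)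
    have img: "fst ` Pset x y i j = ?D"
    proof (intro set_eqI iffI)
      fix p assume "p \<in> fst ` Pset x y i j"
      then obtain q where pq: "p \<in> {i..<?n}" "q \<in> {0..<j}" "critical x y p q"
        by (auto simp: Pset_def)
      have le: "p \<le> q" using crit_le[OF pq(3)] .
      have rc: "restr_critical x y w p q" using pq le ir unfolding restr_critical_def by auto
      have st: "stored x y w enc p = Some (enc p q)"
        unfolding stored_def using rc the_rc[OF rc] by auto
      have k0: "p div R \<le> q div R" using le R by (simp add: zdiv_mono1)
      have k1: "q div R < j div R" using div_lt[OF R ir(7)] pq by simp
      have "int (enc p q) \<le> q div R - p div R" unfolding enc_def using k0 by simp
      then have "int (enc p q) < j div R - p div R" using k1 by simp
      then show "p \<in> ?D" using st pq le by auto
    next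
      fix p assume "p \<in> ?D"
      then obtain e where pe: "i \<le> p" "p < j" "p < ?n" "stored x y w enc p = Some e" "int e < j div R - p div R"
        by auto
      then obtain q where rc: "restr_critical x y w p q"
        unfolding stored_def by (auto split: if_splits)
      have ex: "\<exists>q. restr_critical x y w p q" using rc by blast
      have "stored x y w enc p = Some (enc p (THE q. restr_critical x y w p q))"
        unfolding stored_def using ex by simp
      then have ee: "e = enc p q" using pe(4) unfolding the_rc[OF rc] by simp
      have cr: "critical x y p q" using rc unfolding restr_critical_def by auto
      have "q < j"
      proof (rule ccontr)
        assume "\<not> q < j"
        then have "j div R \<le> q div R" using R by (simp add: zdiv_mono1)
        moreover have "i div R \<le> p div R" using pe R by (simp add: zdiv_mono1)
        moreover have "j div R - i div R \<le> int w div R"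
          using div_diff_le[OF R ir(6) ir(7) ir(5)] .
        moreover have "int w div R = int (w div r)" unfolding R_def by (simp add: zdiv_int)
        ultimately have "j div R - p div R \<le> int (enc p q)" unfolding enc_def by auto
        then show False using pe ee by simp
      qed
      then have "(p, q) \<in> Pset x y i j" using cr crit_range[OF cr] pe by (auto simp: Pset_def)
      then show "p \<in> fst ` Pset x y i j" by force
    qed
    have "card (Pset x y i j) = card ?D" using card_image[OF inj] img by simp
    then show "dec (length x) (length y) (stored x y w enc) i j = hsm x y i j"
      unfolding dec_def using h by simp
  qed
qed


end
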